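(* Let $(a_{ij})_{i,j=1}^s$, $(b_i)_{i=1}^s$ be the coefficients of an $s$-stage Runge–Kutta scheme with all $b_i\neq 0$, and set $c_i=\sum_{j}a_{ij}$, $d_j=\sum_i b_i a_{ij}$. Assume the simplifying assumption $D(1)$ holds, i.e. $d_j=b_j(1-c_j)$ for all $j=1,\dots,s$. (i) If the scheme satisfies the classical order conditions up to order three, then it satisfies the additional order-three condition $\sum_i \frac{d_i^2}{b_i}=\frac13$. (ii) If the scheme satisfies the classical order conditions up to order four, then it satisfies, in addition, the additional order-four conditions $$\sum_i c_i\frac{d_i^2}{b_i}=\frac1{12},\quad \sum_i\frac{d_i^3}{b_i^2}=\frac14,\quad \sum_{i,j}\frac{b_i}{b_j}c_i a_{ij}d_j=\frac5{24},\quad \sum_{i,j}\frac{d_i}{b_j}a_{ij}d_j=\frac18.$$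
   Context: All sums run from $1$ to $s$. The classical order conditions (for an ODE $y'=f(y)$) up to order four are: $\sum b_i=1$; $\sum d_i=\frac12$; $\sum c_id_i=\frac16$, $\sum b_ic_i^2=\frac13$; $\sum b_ic_i^3=\frac14$, $\sum b_ic_ia_{ij}c_j=\frac18$, $\sum d_ic_i^2=\frac1{12}$, $\sum d_ia_{ij}c_j=\frac1{24}$. The "additional order conditions" are the extra conditions (due to Hager and Bonnans–Laurent-Varin) needed so that the Runge–Kutta discretization of an optimal control problem, in which the state is discretized with $(a_{ij},b_i)$ and the adjoint state with the scheme $\hat b_i=b_i$, $\hat a_{ij}=b_j-\frac{b_j}{b_i}a_{ji}$ (so that discretization and optimization commute), attains the corresponding order. *)

theory Defs
  imports Complex_Main
begin

definition rk_c :: "nat \<Rightarrow> (nat \<Rightarrow> nat \<Rightarrow> real) \<Rightarrow> nat \<Rightarrow> real" where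
  "rk_c s a i = (\<Sum>j=1..s. a i j)"

definition rk_d :: "nat \<Rightarrow> (nat \<Rightarrow> nat \<Rightarrow> real) \<Rightarrow> (nat \<Rightarrow> real) \<Rightarrow> nat \<Rightarrow> real" where
  "rk_d s a b j = (\<Sum>i=1..s. b i * a i j)"

definition classical_order3 :: "nat \<Rightarrow> (nat \<Rightarrow> nat \<Rightarrow> real) \<Rightarrow> (nat \<Rightarrow> real) \<Rightarrow> bool" where
  "classical_order3 s a b \<longleftrightarrow>
     (\<Sum>i=1..s. b i) = 1 \<and>
     (\<Sum>i=1..s. rk_d s a b i) = 1/2 \<and>
     (\<Sum>i=1..s. rk_c s a i * rk_d s a b i) = 1/6 \<and>
     (\<Sum>i=1..s. b i * (rk_c s a i)^2) = 1/3"

definition classical_order4 :: "nat \<Rightarrow> (nat \<Rightarrow> nat \<Rightarrow> real) \<Rightarrow> (nat \<Rightarrow> real) \<Rightarrow> bool" where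
  "classical_order4 s a b \<longleftrightarrow>
     classical_order3 s a b \<and>
     (\<Sum>i=1..s. b i * (rk_c s a i)^3) = 1/4 \<and>
     (\<Sum>i=1..s. \<Sum>j=1..s. b i * rk_c s a i * a i j * rk_c s a j) = 1/8 \<and>
     (\<Sum>i=1..s. rk_d s a b i * (rk_c s a i)^2) = 1/12 \<and>
     (\<Sum>i=1..s. \<Sum>j=1..s. rk_d s a b i * a i j * rk_c s a j) = 1/24"

definition simplifying_D1 :: "nat \<Rightarrow> (nat \<Rightarrow> nat \<Rightarrow> real) \<Rightarrow> (nat \<Rightarrow> real) \<Rightarrow> bool" where
  "simplifying_D1 s a b \<longleftrightarrow>
     (\<forall>j\<in>{1..s}. rk_d s a b j = b j * (1 - rk_c s a j))"

end

theory Submission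
  imports Defs
begin

theorem mainTheorem1:
  fixes s :: nat and a :: "nat \<Rightarrow> nat \<Rightarrow> real" and b :: "nat \<Rightarrow> real"
  assumes b_nz: "\<forall>i\<in>{1..s}. b i \<noteq> 0"
    and D1: "simplifying_D1 s a b"
  shows "(classical_order3 s a b \<longrightarrow>
            (\<Sum>i=1..s. (rk_d s a b i)^2 / b i) = 1/3)
       \<and> (classical_order4 s a b \<longrightarrow>
            (\<Sum>i=1..s. rk_c s a i * (rk_d s a b i)^2 / b i) = 1/12 \<and>
            (\<Sum>i=1..s. (rk_d s a b i)^3 / (b i)^2) = 1/4 \<and>
            (\<Sum>i=1..s. \<Sum>j=1..s. b i / b j * rk_c s a i * a i j * rk_d s a b j) = 5/24 \<and>
            (\<Sum>i=1..s. \<Sum>j=1..s. rk_d s a b i / b j * a i j * rk_d s a b j) = 1/8)"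
proof -
  define c where "c = rk_c s a"
  define d where "d = rk_d s a b"
  have dj: "\<And>j. j \<in> {1..s} \<Longrightarrow> d j = b j * (1 - c j)"
    using D1 unfolding simplifying_D1_def c_def d_def by blast
  have cdef: "\<And>i. c i = (\<Sum>j=1..s. a i j)" unfolding c_def rk_c_def by simp
  have sd: "(\<Sum>i=1..s. d i) = (\<Sum>i=1..s. b i) - (\<Sum>i=1..s. b i * c i)"
  proof -
    have "(\<Sum>i=1..s. d i) = (\<Sum>i=1..s. b i - b i * c i)"
      by (rule sum.cong) (auto simp: dj algebra_simps)
    then show ?thesis by (simp add: sum_subtractf)
  qed
  have P3: "(\<Sum>i=1..s. (d i)^2 / b i) = 1/3" if o3: "classical_order3 s a b"
  proof -
    from o3 have h: "(\<Sum>i=1..s. b i) = 1" "(\<Sum>i=1..s. d i) = 1/2"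
      "(\<Sum>i=1..s. c i * d i) = 1/6" "(\<Sum>i=1..s. b i * (c i)^2) = 1/3"
      unfolding classical_order3_def c_def d_def by auto
    have bc: "(\<Sum>i=1..s. b i * c i) = 1/2" using sd h by simp
    have "(\<Sum>i=1..s. (d i)^2 / b i) = (\<Sum>i=1..s. b i - 2*(b i * c i) + b i * (c i)^2)"
      by (rule sum.cong) (use b_nz in \<open>auto simp: dj field_simps power2_eq_square\<close>)
    also have "\<dots> = 1/3"
      apply (simp add: sum.distrib sum_subtractf sum_distrib_left[symmetric]) using h bc by simp
    finally show ?thesis .
  qed
  have P4: "(\<Sum>i=1..s. c i * (d i)^2 / b i) = 1/12 \<and>
            (\<Sum>i=1..s. (d i)^3 / (b i)^2) = 1/4 \<and>
            (\<Sum>i=1..s. \<Sum>j=1..s. b i / b j * c i * a i j * d j) = 5/24 \<and>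
            (\<Sum>i=1..s. \<Sum>j=1..s. d i / b j * a i j * d j) = 1/8"
    if o4: "classical_order4 s a b"
  proof -
    from o4 have h: "(\<Sum>i=1..s. b i) = 1" "(\<Sum>i=1..s. d i) = 1/2"
      "(\<Sum>i=1..s. c i * d i) = 1/6" "(\<Sum>i=1..s. b i * (c i)^2) = 1/3"
      "(\<Sum>i=1..s. b i * (c i)^3) = 1/4"
      "(\<Sum>i=1..s. \<Sum>j=1..s. b i * c i * a i j * c j) = 1/8"
      "(\<Sum>i=1..s. \<Sum>j=1..s. d i * a i j * c j) = 1/24"
      unfolding classical_order4_def classical_order3_def c_def d_def by auto
    have bc: "(\<Sum>i=1..s. b i * c i) = 1/2" using sd h by simp
    have e1: "(\<Sum>i=1..s. c i * (d i)^2 / b i) = (\<Sum>i=1..s. b i * c i - 2*(b i * (c i)^2) + b i * (c i)^3)"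
      by (rule sum.cong) (use b_nz in \<open>auto simp: dj field_simps power2_eq_square power3_eq_cube\<close>)
    have e2: "(\<Sum>i=1..s. (d i)^3 / (b i)^2) = (\<Sum>i=1..s. b i - 3*(b i * c i) + 3*(b i * (c i)^2) - b i * (c i)^3)"
      by (rule sum.cong) (use b_nz in \<open>auto simp: dj field_simps power2_eq_square power3_eq_cube\<close>)
    have e3: "(\<Sum>i=1..s. \<Sum>j=1..s. b i / b j * c i * a i j * d j)
        = (\<Sum>i=1..s. b i * (c i)^2 - (\<Sum>j=1..s. b i * c i * a i j * c j))"
    proof (rule sum.cong)
      fix i assume i: "i \<in> {1..s}"
      have "(\<Sum>j=1..s. b i / b j * c i * a i j * d j) = (\<Sum>j=1..s. b i * c i * a i j - b i * c i * a i j * c j)"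
        by (rule sum.cong) (use b_nz in \<open>auto simp: dj field_simps\<close>)
      also have "\<dots> = b i * (c i)^2 - (\<Sum>j=1..s. b i * c i * a i j * c j)"
        by (simp add: sum_subtractf sum_distrib_left[symmetric] cdef power2_eq_square)
      finally show "(\<Sum>j=1..s. b i / b j * c i * a i j * d j) = b i * (c i)^2 - (\<Sum>j=1..s. b i * c i * a i j * c j)" .
    qed simp
    have e4: "(\<Sum>i=1..s. \<Sum>j=1..s. d i / b j * a i j * d j)
        = (\<Sum>i=1..s. c i * d i - (\<Sum>j=1..s. d i * a i j * c j))"
    proof (rule sum.cong)
      fix i assume i: "i \<in> {1..s}"
      have "(\<Sum>j=1..s. d i / b j * a i j * d j) = (\<Sum>j=1..s. d i * a i j - d i * a i j * c j)"
        by (rule sum.cong) (use b_nz in \<open>auto simp: dj field_simps\<close>)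
      also have "\<dots> = c i * d i - (\<Sum>j=1..s. d i * a i j * c j)"
        by (simp add: sum_subtractf sum_distrib_left[symmetric] cdef mult.commute)
      finally show "(\<Sum>j=1..s. d i / b j * a i j * d j) = c i * d i - (\<Sum>j=1..s. d i * a i j * c j)" .
    qed simp
    show ?thesis
      unfolding e1 e2 e3 e4
      apply (simp add: sum.distrib sum_subtractf sum_distrib_left[symmetric]) using h bc by simp
  qed
  show ?thesis using P3 P4 unfolding c_def d_def by blast
qed

end
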